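(* Fix $(\hat\imath,\hat\jmath)\in\mathcal E$ and let $B_1$, $B^n_1$ be the associated matrices (which are invertible). For every probability vector $p\in\mathbb R^I$ with positive entries, $$\vartheta_p=-\frac{\langle e,B_1^{-1}h\rangle}{\langle e,B_1^{-1}p\rangle},\qquad \vartheta^n_p=-\frac{\langle e,(B^n_1)^{-1}h^n\rangle}{\langle e,(B^n_1)^{-1}p\rangle}\quad\text{for every }n.$$
   Context: Network and parameters: $\mathcal I=\{1,\dots,I\}$, $\mathcal J=\{1,\dots,J\}$, edges $\mathcal E\subset\mathcal I\times\mathcal J$ with the bipartite graph $\mathcal G=(\mathcal I\cup\mathcal J,\mathcal E)$ a tree; $i\sim j$ iff $(i,j)\in\mathcal E$, $\mathcal J(i)=\{j:i\sim j\}$, $\mathcal I(j)=\{i:i\sim j\}$; $\mathbb R^{\mathcal G}$ denotes arrays in $\mathbb R^{I\times J}$ vanishing off $\mathcal E$, $\mathbb R^{\mathcal G}_+$ those with nonnegative entries. For each $n\in\mathbb N$: $\lambda^n_i>0$, $\mu^n_{ij}>0$, $N^n_j\in\mathbb N$ with $\lambda^n_i/n\to\lambda_i>0$, $N^n_j/n\to\nu_j>0$, $\mu^n_{ij}\to\mu_{ij}>0$, $\hat\lambda^n_i:=(\lambda^n_i-n\lambda_i)/\sqrt n\to\hat\lambda_i$, $\hat\mu^n_{ij}:=\sqrt n(\mu^n_{ij}-\mu_{ij})\to\hat\mu_{ij}$, $\hat\nu^n_j:=\sqrt n(N^n_j/n-\nu_j)\to\hat\nu_j$. Complete resource pooling: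 the LP "minimize $\max_j\sum_i\xi_{ij}$ over $\xi\in\mathbb R^{\mathcal G}_+$ subject to $\sum_j\mu_{ij}\nu_j\xi_{ij}=\lambda_i$ $\forall i$" has a unique solution $\xi^*$, with $\sum_i\xi^*_{ij}=1$ $\forall j$ and $\xi^*_{ij}>0$ for $i\sim j$; $z^*_{ij}:=\xi^*_{ij}\nu_j$. Let $\theta_j:=\hat\nu_j+\sum_{i\in\mathcal I(j)}(\hat\mu_{ij}/\mu_{ij})z^*_{ij}$ and $\theta^n_j:=\hat\nu^n_j+\sum_{i\in\mathcal I(j)}(\hat\mu^n_{ij}/\mu^n_{ij})z^*_{ij}$. SWSS: for a probability vector $p$ with positive entries, $\vartheta_p$ is the (unique) optimal value of: maximize $\vartheta$ over $(\vartheta,\kappa)\in\mathbb R\times\mathbb R^{\mathcal G}$ subject to $\hat\lambda_i\le\sum_{j\in\mathcal J(i)}\mu_{ij}\kappa_{ij}-\vartheta p_i$ $\forall i$ and $\sum_{i\in\mathcal I(j)}\kappa_{ij}=\theta_j$ $\forall j$; $\vartheta^n_p$ is the optimal value of the same program with $\hat\lambda_i,\mu_{ij},\theta_j$ replaced by $\hat\lambda^n_i,\mu^n_{ij},\theta^n_j$. Drift data: $h_i:=\hat\lambda_i-\sum_{j\in\mathcal J(i)}(\mu_{ij}\xi^*_{ij}\hat\nu_j+\hat\mu_{ij}z^*_{ij})$ and $h^n_i:=n^{-1/2}\big(\lambda^n_i-\sum_{j\in\mathcal J(i)}\mu^n_{ij}\xi^*_{ij}N^n_j\big)$. Let $\mathcal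 D=\{(\alpha,\beta)\in\mathbb R^I\times\mathbb R^J:\sum_i\alpha_i=\sum_j\beta_j\}$ and $\Psi:\mathcal D\to\mathbb R^{\mathcal G}$ the unique linear map with $\sum_j\Psi_{ij}(\alpha,\beta)=\alpha_i$, $\sum_i\Psi_{ij}(\alpha,\beta)=\beta_j$. For $(\hat\imath,\hat\jmath)\in\mathcal E$, $B_1\in\mathbb R^{I\times I}$, $B_2\in\mathbb R^{I\times J}$ are the unique matrices with column $\hat\jmath$ of $B_2$ zero and $\sum_{j\in\mathcal J(i)}\mu_{ij}\Psi_{ij}(\alpha,\beta)=(B_1\alpha+B_2\beta)_i$ for all $i$ and $(\alpha,\beta)\in\mathcal D$; $B^n_1,B^n_2$ are defined the same way with $\mu^n_{ij}$ in place of $\mu_{ij}$. $e$ is the all-ones vector. *)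

theory Defs
  imports "HOL-Analysis.Analysis"
begin

definition badj :: "('i \<times> 'j) set \<Rightarrow> ('i + 'j) \<Rightarrow> ('i + 'j) \<Rightarrow> bool" where
  "badj E u v = (case (u, v) of
      (Inl i, Inr j) \<Rightarrow> (i, j) \<in> E
    | (Inr j, Inl i) \<Rightarrow> (i, j) \<in> E
    | _ \<Rightarrow> False)"

definition bip_connected :: "('i \<times> 'j) set \<Rightarrow> bool" where
  "bip_connected E = (\<forall>u v. (badj E)\<^sup>*\<^sup>* u v)"

definition bip_acyclic :: "('i \<times> 'j) set \<Rightarrow> bool" where
  "bip_acyclic E = (\<not> (\<exists>cs. distinct cs \<and> length cs \<ge> 3 \<and>
      (\<forall>k < length cs. badj E (cs ! k) (cs ! ((k + 1) mod length cs)))))"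

definition bip_tree :: "('i \<times> 'j) set \<Rightarrow> bool" where
  "bip_tree E = (bip_connected E \<and> bip_acyclic E)"

definition in_RG :: "('i \<times> 'j) set \<Rightarrow> ('i \<Rightarrow> 'j \<Rightarrow> real) \<Rightarrow> bool" where
  "in_RG E x = (\<forall>i j. (i, j) \<notin> E \<longrightarrow> x i j = 0)"

definition crp_feasible ::
  "('i::finite \<times> 'j::finite) set \<Rightarrow> ('i \<Rightarrow> 'j \<Rightarrow> real) \<Rightarrow> ('j \<Rightarrow> real) \<Rightarrow> ('i \<Rightarrow> real)
   \<Rightarrow> ('i \<Rightarrow> 'j \<Rightarrow> real) \<Rightarrow> bool" where
  "crp_feasible E mu nu lam xi =
     (in_RG E xi \<and> (\<forall>i j. xi i j \<ge> 0) \<and>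
      (\<forall>i. (\<Sum>j\<in>{j. (i, j) \<in> E}. mu i j * nu j * xi i j) = lam i))"

definition crp_objective :: "('i::finite \<Rightarrow> 'j::finite \<Rightarrow> real) \<Rightarrow> real" where
  "crp_objective xi = Max (range (\<lambda>j. \<Sum>i\<in>UNIV. xi i j))"

definition crp_optimal ::
  "('i::finite \<times> 'j::finite) set \<Rightarrow> ('i \<Rightarrow> 'j \<Rightarrow> real) \<Rightarrow> ('j \<Rightarrow> real) \<Rightarrow> ('i \<Rightarrow> real)
   \<Rightarrow> ('i \<Rightarrow> 'j \<Rightarrow> real) \<Rightarrow> bool" where
  "crp_optimal E mu nu lam xi =
     (crp_feasible E mu nu lam xi \<and>
      (\<forall>xi'. crp_feasible E mu nu lam xi' \<longrightarrow> crp_objective xi \<le> crp_objective xi'))"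

definition crp_unique_solution ::
  "('i::finite \<times> 'j::finite) set \<Rightarrow> ('i \<Rightarrow> 'j \<Rightarrow> real) \<Rightarrow> ('j \<Rightarrow> real) \<Rightarrow> ('i \<Rightarrow> real)
   \<Rightarrow> ('i \<Rightarrow> 'j \<Rightarrow> real) \<Rightarrow> bool" where
  "crp_unique_solution E mu nu lam xi =
     (crp_optimal E mu nu lam xi \<and> (\<forall>xi'. crp_optimal E mu nu lam xi' \<longrightarrow> xi' = xi))"

definition swss_feasible ::
  "('i::finite \<times> 'j::finite) set \<Rightarrow> ('i \<Rightarrow> real) \<Rightarrow> ('i \<Rightarrow> 'j \<Rightarrow> real) \<Rightarrow> ('j \<Rightarrow> real)
   \<Rightarrow> ('i \<Rightarrow> real) \<Rightarrow> real \<Rightarrow> bool" where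
  "swss_feasible E lamh mu theta p v =
     (\<exists>kappa. in_RG E kappa \<and>
        (\<forall>i. lamh i \<le> (\<Sum>j\<in>{j. (i, j) \<in> E}. mu i j * kappa i j) - v * p i) \<and>
        (\<forall>j. (\<Sum>i\<in>{i. (i, j) \<in> E}. kappa i j) = theta j))"

definition swss_opt_value ::
  "('i::finite \<times> 'j::finite) set \<Rightarrow> ('i \<Rightarrow> real) \<Rightarrow> ('i \<Rightarrow> 'j \<Rightarrow> real) \<Rightarrow> ('j \<Rightarrow> real)
   \<Rightarrow> ('i \<Rightarrow> real) \<Rightarrow> real \<Rightarrow> bool" where
  "swss_opt_value E lamh mu theta p v =
     (swss_feasible E lamh mu theta p v \<and>
      (\<forall>w. swss_feasible E lamh mu theta p w \<longrightarrow> w \<le> v))"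

definition Psi :: "('i::finite \<times> 'j::finite) set \<Rightarrow> real^'i \<Rightarrow> real^'j \<Rightarrow> ('i \<Rightarrow> 'j \<Rightarrow> real)" where
  "Psi E a b = (THE x. in_RG E x \<and> (\<forall>i. (\<Sum>j\<in>UNIV. x i j) = a $ i) \<and>
                                   (\<forall>j. (\<Sum>i\<in>UNIV. x i j) = b $ j))"

definition Bmats :: "('i::finite \<times> 'j::finite) set \<Rightarrow> ('i \<Rightarrow> 'j \<Rightarrow> real) \<Rightarrow> 'j
                     \<Rightarrow> (real^'i^'i) \<times> (real^'j^'i)" where
  "Bmats E mu jh = (THE (B1, B2). (\<forall>i. B2 $ i $ jh = 0) \<and>
      (\<forall>a b. sum (\<lambda>i. a $ i) UNIV = sum (\<lambda>j. b $ j) UNIV \<longrightarrow>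
         (\<forall>i. (\<Sum>j\<in>{j. (i, j) \<in> E}. mu i j * Psi E a b i j) = (B1 *v a + B2 *v b) $ i)))"

definition B1mat :: "('i::finite \<times> 'j::finite) set \<Rightarrow> ('i \<Rightarrow> 'j \<Rightarrow> real) \<Rightarrow> 'j \<Rightarrow> real^'i^'i" where
  "B1mat E mu jh = fst (Bmats E mu jh)"

end

theory Submission
  imports Defs
begin

definition gpath :: "('a \<Rightarrow> 'a \<Rightarrow> bool) \<Rightarrow> 'a list \<Rightarrow> bool" where
  "gpath R cs = (distinct cs \<and> 2 \<le> length cs \<and> (\<forall>k. Suc k < length cs \<longrightarrow> R (cs!k) (cs!Suc k)))"

definition nocycle :: "('a \<Rightarrow> 'a \<Rightarrow> bool) \<Rightarrow> bool" where
  "nocycle R = (\<not> (\<exists>cs. distinct cs \<and> length cs \<ge> 3 \<and>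
      (\<forall>k < length cs. R (cs ! k) (cs ! ((k + 1) mod length cs)))))"

lemma leaf_end:
  assumes irr: "\<And>u. \<not> R u u" and nc: "nocycle R"
    and p: "gpath R cs" and mx: "\<And>cs'. gpath R cs' \<Longrightarrow> length cs' \<le> length cs"
    and w: "R (last cs) w"
  shows "w = cs ! (length cs - 2)"
proof -
  define n where "n = length cs"
  have n2: "2 \<le> n" and dc: "distinct cs" and adj: "\<And>k. Suc k < n \<Longrightarrow> R (cs!k) (cs!Suc k)"
    using p by (auto simp: gpath_def n_def)
  have lastv: "last cs = cs ! (n - 1)" using n2 n_def by (subst last_conv_nth) auto
  show ?thesis
  proof (cases "w \<in> set cs")
    case False
    have "gpath R (cs @ [w])"
      unfolding gpath_def
    proof (intro conjI allI impI)
      show "distinct (cs @ [w])" using dc False by simp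
      show "2 \<le> length (cs @ [w])" using n2 n_def by simp
      fix k assume k: "Suc k < length (cs @ [w])"
      show "R ((cs @ [w]) ! k) ((cs @ [w]) ! Suc k)"
      proof (cases "Suc k < n")
        case True thus ?thesis using adj[OF True] by (simp add: nth_append n_def)
      next
        case False
        then have kn: "k = n - 1" using k n_def by simp
        have kl: "k < length cs" using kn n2 n_def by simp
        have e1: "(cs @ [w]) ! k = last cs" using kn kl lastv by (simp add: nth_append n_def)
        have "Suc k = length cs" using kn n2 n_def by simp
        then have e2: "(cs @ [w]) ! Suc k = w" by (simp add: nth_append)
        show ?thesis using w e1 e2 by simp
      qed
    qed
    from mx[OF this] show ?thesis by (simp add: n_def[symmetric])
  next
    case True
    then obtain k where k: "k < n" "w = cs ! k" by (auto simp: in_set_conv_nth n_def)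
    have "k \<noteq> n - 1" using irr w lastv k by auto
    show ?thesis
    proof (rule ccontr)
      assume "w \<noteq> cs ! (length cs - 2)"
      then have kk: "k + 2 < n" using k \<open>k \<noteq> n - 1\<close> n_def by (cases "k = n - 2") auto
      define cy where "cy = drop k cs"
      have lc: "length cy = n - k" by (simp add: cy_def n_def)
      have "distinct cy \<and> length cy \<ge> 3 \<and>
          (\<forall>t < length cy. R (cy ! t) (cy ! ((t + 1) mod length cy)))"
      proof (intro conjI allI impI)
        show "distinct cy" using dc by (simp add: cy_def)
        show "length cy \<ge> 3" using lc kk by simp
        fix t assume t: "t < length cy"
        show "R (cy ! t) (cy ! ((t + 1) mod length cy))"
        proof (cases "t + 1 < length cy")
          case True
          then have "(t+1) mod length cy = Suc t" by simp
          moreover have "R (cs ! (k + t)) (cs ! Suc (k + t))" using adj True lc by simp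
          ultimately show ?thesis using True t k by (simp add: cy_def n_def)
        next
          case False
          then have "t = n - k - 1" using t lc by simp
          moreover have "cy ! (n - k - 1) = cs ! (n - 1)" using kk by (simp add: cy_def n_def)
          moreover have "cy ! 0 = cs ! k" using kk by (simp add: cy_def n_def)
          moreover have "t + 1 = length cy" using \<open>t = n - k - 1\<close> lc kk by simp
          then have "(t + 1) mod length cy = 0" by simp
          ultimately show ?thesis using w lastv k lc by simp
        qed
      qed
      thus False using nc unfolding nocycle_def by blast
    qed
  qed
qed

lemma two_leaves:
  fixes R :: "'a::finite \<Rightarrow> 'a \<Rightarrow> bool"
  assumes sym: "\<And>u v. R u v \<Longrightarrow> R v u" and irr: "\<And>u. \<not> R u u" and nc: "nocycle R"
    and ab: "R a b"
  shows "\<exists>u v. u \<noteq> v \<and> (\<exists>!w. R u w) \<and> (\<exists>!w. R v w)"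
proof -
  let ?P = "{cs. gpath R cs}"
  have fin: "finite ?P"
    by (rule finite_subset[OF _ finite_subset_distinct[of "UNIV :: 'a set"]]) (auto simp: gpath_def)
  have ab2: "gpath R [a, b]" using ab irr by (auto simp: gpath_def less_Suc_eq)
  define L where "L = Max (length ` ?P)"
  have "L \<in> length ` ?P" unfolding L_def using fin ab2 by (intro Max_in) auto
  then obtain cs where cs: "gpath R cs" "length cs = L" by auto
  have mx: "length cs' \<le> length cs" if "gpath R cs'" for cs'
    using cs fin that unfolding L_def by (auto intro: Max_ge)
  define n where "n = length cs"
  have n2: "2 \<le> n" and dc: "distinct cs" and adj: "\<And>k. Suc k < n \<Longrightarrow> R (cs!k) (cs!Suc k)"
    using cs by (auto simp: gpath_def n_def)
  have lastv: "last cs = cs ! (n - 1)" using n2 n_def by (subst last_conv_nth) auto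
  have leaf1: "\<exists>!w. R (last cs) w"
  proof
    show "R (last cs) (cs ! (length cs - 2))"
      using adj[of "n-2"] n2 lastv sym by (simp add: n_def Suc_diff_Suc numeral_2_eq_2)
    show "\<And>w. R (last cs) w \<Longrightarrow> w = cs ! (length cs - 2)"
      using leaf_end[OF irr nc cs(1) mx] by blast
  qed
  have rp: "gpath R (rev cs)" unfolding gpath_def
  proof (intro conjI allI impI)
    show "distinct (rev cs)" using dc by simp
    show "2 \<le> length (rev cs)" using n2 n_def by simp
    fix k assume k: "Suc k < length (rev cs)"
    have "R (cs ! (n - 2 - k)) (cs ! Suc (n - 2 - k))" using adj k n_def by simp
    moreover have "Suc (n - 2 - k) = n - 1 - k" using k n_def by simp
    ultimately show "R (rev cs ! k) (rev cs ! Suc k)" using k n_def sym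
      by (simp add: rev_nth Suc_diff_Suc numeral_2_eq_2)
  qed
  have hd0: "hd cs = cs ! 0" using n2 n_def by (cases cs) auto
  have leaf2: "\<exists>!w. R (last (rev cs)) w"
  proof
    show "R (last (rev cs)) (rev cs ! (length (rev cs) - 2))"
      using adj[of 0] n2 sym cs hd0 by (simp add: n_def last_rev rev_nth)
    show "\<And>w. R (last (rev cs)) w \<Longrightarrow> w = rev cs ! (length (rev cs) - 2)"
      using leaf_end[OF irr nc rp] mx by fastforce
  qed
  have "cs ! (n - 1) \<noteq> cs ! 0"
    using nth_eq_iff_index_eq[OF dc, of "n-1" 0] n2 n_def by (cases cs) auto
  then have "last cs \<noteq> last (rev cs)"
    using hd0 lastv by (simp add: last_rev)
  thus ?thesis using leaf1 leaf2 by blast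
qed

definition sR :: "('i \<times> 'j) set \<Rightarrow> ('i \<Rightarrow> 'j \<Rightarrow> real) \<Rightarrow> ('i+'j) \<Rightarrow> ('i+'j) \<Rightarrow> bool" where
  "sR E x = badj {(i,j). (i,j) \<in> E \<and> x i j \<noteq> 0}"

lemma badj_sym: "badj E u v \<Longrightarrow> badj E v u"
  by (auto simp: badj_def split: sum.splits)

lemma badj_irr: "\<not> badj E u u"
  by (auto simp: badj_def split: sum.splits)

lemma acyc_nocycle: "bip_acyclic E \<Longrightarrow> nocycle (badj E)"
  by (simp add: bip_acyclic_def nocycle_def)

lemma nocycle_mono: "nocycle R \<Longrightarrow> (\<And>u v. R' u v \<Longrightarrow> R u v) \<Longrightarrow> nocycle R'"
  unfolding nocycle_def by blast

lemma sR_badj: "sR E x u v \<Longrightarrow> badj E u v"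
  by (auto simp: sR_def badj_def split: sum.splits)

lemma leaf_avoid:
  fixes x :: "'i::finite \<Rightarrow> 'j::finite \<Rightarrow> real"
  assumes "bip_acyclic E" "x i0 j0 \<noteq> 0" "(i0,j0) \<in> E"
  shows "\<exists>u. u \<noteq> z \<and> (\<exists>!w. sR E x u w)"
proof -
  have nc: "nocycle (sR E x)"
    using nocycle_mono[OF acyc_nocycle[OF assms(1)] sR_badj] .
  have "sR E x (Inl i0) (Inr j0)" using assms by (simp add: sR_def badj_def)
  have sym: "\<And>u v. sR E x u v \<Longrightarrow> sR E x v u" by (simp add: sR_def badj_sym)
  have irr: "\<And>u. \<not> sR E x u u" by (simp add: sR_def badj_irr)
  from two_leaves[OF sym irr nc \<open>sR E x (Inl i0) (Inr j0)\<close>] obtain u v where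
    uv: "u \<noteq> v" "\<exists>!w. sR E x u w" "\<exists>!w. sR E x v w"
    by blast
  show ?thesis
  proof (cases "u = z")
    case True thus ?thesis using uv by (intro exI[where x=v]) auto
  next
    case False thus ?thesis using uv by blast
  qed
qed

lemma leaf_Inl:
  assumes "\<exists>!w. sR E x (Inl i) w"
  obtains j where "(i,j)\<in>E" "x i j \<noteq> 0" "\<And>j'. (i,j')\<in>E \<Longrightarrow> x i j' \<noteq> 0 \<Longrightarrow> j' = j"
proof -
  from assms obtain w where w: "sR E x (Inl i) w" and u: "\<And>w'. sR E x (Inl i) w' \<Longrightarrow> w' = w"
    by blast
  then obtain j where wj: "w = Inr j" by (cases w) (auto simp: sR_def badj_def)
  have "(i,j)\<in>E" "x i j \<noteq> 0" using w wj by (auto simp: sR_def badj_def)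
  moreover have "j' = j" if "(i,j')\<in>E" "x i j' \<noteq> 0" for j'
    using u[of "Inr j'"] that wj by (auto simp: sR_def badj_def)
  ultimately show ?thesis using that by blast
qed

lemma leaf_Inr:
  assumes "\<exists>!w. sR E x (Inr j) w"
  obtains i where "(i,j)\<in>E" "x i j \<noteq> 0" "\<And>i'. (i',j)\<in>E \<Longrightarrow> x i' j \<noteq> 0 \<Longrightarrow> i' = i"
proof -
  from assms obtain w where w: "sR E x (Inr j) w" and u: "\<And>w'. sR E x (Inr j) w' \<Longrightarrow> w' = w"
    by blast
  then obtain i where wj: "w = Inl i" by (cases w) (auto simp: sR_def badj_def)
  have "(i,j)\<in>E" "x i j \<noteq> 0" using w wj by (auto simp: sR_def badj_def)
  moreover have "i' = i" if "(i',j)\<in>E" "x i' j \<noteq> 0" for i'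
    using u[of "Inl i'"] that wj by (auto simp: sR_def badj_def)
  ultimately show ?thesis using that by blast
qed

lemma leaf_Inl_ex:
  assumes "\<exists>!w. sR E x (Inl i) w"
  shows "\<exists>j. (i,j)\<in>E \<and> x i j \<noteq> 0 \<and> (\<forall>j'. (i,j')\<in>E \<and> x i j' \<noteq> 0 \<longrightarrow> j' = j)"
  using leaf_Inl[OF assms] by metis

lemma leaf_Inr_ex:
  assumes "\<exists>!w. sR E x (Inr j) w"
  shows "\<exists>i. (i,j)\<in>E \<and> x i j \<noteq> 0 \<and> (\<forall>i'. (i',j)\<in>E \<and> x i' j \<noteq> 0 \<longrightarrow> i' = i)"
  using leaf_Inr[OF assms] by metis

lemma sum_single_UNIV:
  fixes f :: "'a::finite \<Rightarrow> real"
  assumes "\<And>j'. j' \<noteq> j \<Longrightarrow> f j' = 0"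
  shows "(\<Sum>j\<in>UNIV. f j) = f j"
proof -
  have "(\<Sum>j\<in>UNIV. f j) = f j + (\<Sum>j\<in>UNIV - {j}. f j)"
    by (rule sum.remove) auto
  also have "(\<Sum>j\<in>UNIV - {j}. f j) = 0" using assms by (intro sum.neutral) auto
  finally show ?thesis by simp
qed

lemma flow_zero:
  fixes x :: "'i::finite \<Rightarrow> 'j::finite \<Rightarrow> real"
  assumes acyc: "bip_acyclic E" and rg: "in_RG E x"
    and cr: "\<And>i j. (i,j) \<in> E \<Longrightarrow> c i j \<noteq> 0"
    and rows: "\<And>i. (\<Sum>j\<in>UNIV. c i j * x i j) = 0"
    and cols: "\<And>j. j \<noteq> jh \<Longrightarrow> (\<Sum>i\<in>UNIV. x i j) = 0"
  shows "x i j = 0"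
proof (rule ccontr)
  assume nz: "x i j \<noteq> 0"
  then have "(i,j) \<in> E" using rg by (auto simp: in_RG_def)
  from leaf_avoid[where x=x and z="Inr jh", OF acyc nz this] obtain u where
    u: "u \<noteq> Inr jh" "\<exists>!w. sR E x u w" by blast
  show False
  proof (cases u)
    case (Inl i')
    with u have lf: "\<exists>!w. sR E x (Inl i') w" by simp
    obtain j1 where j1: "(i',j1)\<in>E" "x i' j1 \<noteq> 0"
      "\<forall>j'. (i',j')\<in>E \<and> x i' j' \<noteq> 0 \<longrightarrow> j' = j1"
      using leaf_Inl_ex[OF lf] by blast
    have "(\<Sum>j\<in>UNIV. c i' j * x i' j) = c i' j1 * x i' j1"
    proof (rule sum_single_UNIV)
      fix j' assume "j' \<noteq> j1"
      have "x i' j' = 0"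
      proof (cases "(i',j') \<in> E")
        case True thus ?thesis using j1(3) \<open>j' \<noteq> j1\<close> by blast
      next
        case False thus ?thesis using rg by (simp add: in_RG_def)
      qed
      thus "c i' j' * x i' j' = 0" by simp
    qed
    thus False using rows[of i'] cr[OF j1(1)] j1(2) by simp
  next
    case (Inr j')
    with u have jj: "j' \<noteq> jh" by simp
    from Inr u have lf: "\<exists>!w. sR E x (Inr j') w" by simp
    obtain i1 where i1: "(i1,j')\<in>E" "x i1 j' \<noteq> 0"
      "\<forall>i'. (i',j')\<in>E \<and> x i' j' \<noteq> 0 \<longrightarrow> i' = i1"
      using leaf_Inr_ex[OF lf] by blast
    have "(\<Sum>i\<in>UNIV. x i j') = x i1 j'"
    proof (rule sum_single_UNIV)
      fix i' assume "i' \<noteq> i1"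
      show "x i' j' = 0"
      proof (cases "(i',j') \<in> E")
        case True thus ?thesis using i1(3) \<open>i' \<noteq> i1\<close> by blast
      next
        case False thus ?thesis using rg by (simp add: in_RG_def)
      qed
    qed
    thus False using cols[OF jj] i1(2) by simp
  qed
qed

definition flowspec :: "('i::finite \<times> 'j::finite) set \<Rightarrow> real^'i \<Rightarrow> real^'j \<Rightarrow> ('i \<Rightarrow> 'j \<Rightarrow> real) \<Rightarrow> bool" where
  "flowspec E a b x = (in_RG E x \<and> (\<forall>i. (\<Sum>j\<in>UNIV. x i j) = a $ i) \<and>
                                   (\<forall>j. (\<Sum>i\<in>UNIV. x i j) = b $ j))"

lemma flow_unique:
  assumes acyc: "bip_acyclic E" and fx: "flowspec E a b x" and fy: "flowspec E a b y"
  shows "x = y"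
proof -
  have "x i j - y i j = 0" for i j
  proof (rule flow_zero[OF acyc, where c = "\<lambda>i j. 1" and jh = undefined])
    show "in_RG E (\<lambda>i j. x i j - y i j)" using fx fy by (auto simp: flowspec_def in_RG_def)
    show "\<And>i. (\<Sum>j\<in>UNIV. 1 * (x i j - y i j)) = 0" using fx fy
      by (simp add: flowspec_def sum_subtractf)
    show "\<And>j. j \<noteq> undefined \<Longrightarrow> (\<Sum>i\<in>UNIV. x i j - y i j) = 0" using fx fy
      by (simp add: flowspec_def sum_subtractf)
  qed simp
  thus ?thesis by (auto intro!: ext)
qed

lemma conn_prop:
  assumes "bip_connected E" "P z" "\<And>u v. badj E u v \<Longrightarrow> P u \<Longrightarrow> P v"
  shows "P w"
proof -
  have "(badj E)\<^sup>*\<^sup>* z w" using assms(1) by (simp add: bip_connected_def)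
  thus ?thesis by (induction rule: rtranclp_induct) (use assms in blast)+
qed

definition Mv :: "('i::finite \<Rightarrow> 'j::finite \<Rightarrow> real) \<Rightarrow> real^('i+'j)" where
  "Mv x = (\<chi> u. case u of Inl i \<Rightarrow> \<Sum>j\<in>UNIV. x i j | Inr j \<Rightarrow> \<Sum>i\<in>UNIV. x i j)"

lemma sum_Plus_UNIV:
  "(\<Sum>u\<in>(UNIV::('a::finite + 'b::finite) set). f u) = (\<Sum>i\<in>UNIV. f (Inl i)) + (\<Sum>j\<in>UNIV. f (Inr j))"
proof -
  have "(\<Sum>u\<in>(UNIV::('a + 'b) set). f u) = (\<Sum>u\<in>(UNIV <+> UNIV). f u)" by simp
  also have "\<dots> = (\<Sum>i\<in>UNIV. f (Inl i)) + (\<Sum>j\<in>UNIV. f (Inr j))"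
    by (subst sum.Plus) (auto simp: o_def)
  finally show ?thesis .
qed

lemma flow_exists:
  fixes a :: "real^'i::finite" and b :: "real^'j::finite"
  assumes conn: "bip_connected E" and sab: "sum (\<lambda>i. a$i) UNIV = sum (\<lambda>j. b$j) UNIV"
  shows "\<exists>x. flowspec E a b x"
proof -
  let ?T = "Mv ` {x. in_RG E x}"
  have sub: "subspace ?T"
    unfolding subspace_def
  proof (intro conjI ballI allI)
    have "Mv (\<lambda>i j. 0) = 0" by (simp add: Mv_def vec_eq_iff split: sum.splits)
    moreover have "in_RG E (\<lambda>i j. 0)" by (simp add: in_RG_def)
    ultimately show "0 \<in> ?T" by (metis (mono_tags, lifting) image_eqI mem_Collect_eq)
  next
    fix v w assume "v \<in> ?T" "w \<in> ?T"
    then obtain x y where xy: "in_RG E x" "in_RG E y" "v = Mv x" "w = Mv y" by auto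
    have "Mv (\<lambda>i j. x i j + y i j) = v + w"
      using xy by (simp add: Mv_def vec_eq_iff sum.distrib split: sum.splits)
    moreover have "in_RG E (\<lambda>i j. x i j + y i j)" using xy by (simp add: in_RG_def)
    ultimately show "v + w \<in> ?T" by (metis (mono_tags, lifting) image_eqI mem_Collect_eq)
  next
    fix c :: real and v assume "v \<in> ?T"
    then obtain x where xy: "in_RG E x" "v = Mv x" by auto
    have "Mv (\<lambda>i j. c * x i j) = c *\<^sub>R v"
      using xy by (simp add: Mv_def vec_eq_iff sum_distrib_left split: sum.splits)
    moreover have "in_RG E (\<lambda>i j. c * x i j)" using xy by (simp add: in_RG_def)
    ultimately show "c *\<^sub>R v \<in> ?T" by (metis (mono_tags, lifting) image_eqI mem_Collect_eq)
  qed
  define w0 :: "real^('i+'j)" where "w0 = (\<chi> u. case u of Inl i \<Rightarrow> a$i | Inr j \<Rightarrow> b$j)"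
  obtain s t where s: "s \<in> span ?T" and orth: "\<And>w. w \<in> span ?T \<Longrightarrow> orthogonal t w"
      and st: "w0 = s + t"
    using orthogonal_subspace_decomp_exists by blast
  have "span ?T = ?T" using sub by (simp only: span_eq_iff)
  with s have "s \<in> ?T" by simp
  then obtain x where rg: "in_RG E x" and sx: "s = Mv x" by blast
  have edge: "t$Inl i + t$Inr j = 0" if ij: "(i,j)\<in>E" for i j
  proof -
    define d where "d = (\<lambda>i' j'. if i' = i \<and> j' = j then 1 else (0::real))"
    have "in_RG E d" using ij by (auto simp: in_RG_def d_def)
    then have "Mv d \<in> span ?T" by (auto intro: span_base)
    then have "t \<bullet> Mv d = 0" using orth by (simp add: orthogonal_def)
    moreover have m1: "Mv d $ Inl i' = (if i' = i then 1 else 0)" for i'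
      by (cases "i' = i") (simp_all add: Mv_def d_def)
    moreover have m2: "Mv d $ Inr j' = (if j' = j then 1 else 0)" for j'
      by (cases "j' = j") (simp_all add: Mv_def d_def)
    moreover have "t \<bullet> Mv d = t$Inl i + t$Inr j"
      unfolding inner_vec_def sum_Plus_UNIV by (simp add: m1 m2 if_distrib cong: if_cong)
    ultimately show ?thesis by simp
  qed
  define f where "f u = (case u of Inl i \<Rightarrow> t$Inl i | Inr j \<Rightarrow> - t$Inr j)" for u
  define c where "c = f (Inl undefined)"
  have fc: "f u = c" for u
  proof (rule conn_prop[OF conn, of "\<lambda>u. f u = c" "Inl undefined"])
    show "f (Inl undefined) = c" by (simp add: c_def)
    fix u v assume "badj E u v" "f u = c"
    then show "f v = c"
    proof (cases u; cases v)
      fix i j assume "u = Inl i" "v = Inr j"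
      then show ?thesis using \<open>badj E u v\<close> \<open>f u = c\<close> edge[of i j]
        by (simp add: badj_def f_def eq_neg_iff_add_eq_0)
    next
      fix i j assume "u = Inr j" "v = Inl i"
      then show ?thesis using \<open>badj E u v\<close> \<open>f u = c\<close> edge[of i j]
        by (simp add: badj_def f_def)
    qed (use \<open>badj E u v\<close> in \<open>auto simp: badj_def\<close>)
  qed
  have tl: "t$Inl i = c" for i using fc[of "Inl i"] by (simp add: f_def)
  have tr: "t$Inr j = - c" for j using fc[of "Inr j"] by (simp add: f_def)
  have "(\<Sum>i\<in>UNIV. s$Inl i) = (\<Sum>j\<in>UNIV. s$Inr j)"
    using sx sum.swap[of x UNIV UNIV] by (simp add: Mv_def)
  moreover have "(\<Sum>i\<in>UNIV. w0$Inl i) = (\<Sum>j\<in>UNIV. w0$Inr j)"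
    using sab by (simp add: w0_def)
  moreover have "w0$u = s$u + t$u" for u using st by simp
  ultimately have "(\<Sum>i\<in>UNIV. t$Inl i) = (\<Sum>j\<in>UNIV. t$Inr j)"
    by (simp add: sum.distrib)
  then have "real CARD('i) * c = - (real CARD('j) * c)" using tl tr by simp
  then have "(real CARD('i) + real CARD('j)) * c = 0" by (simp add: algebra_simps)
  moreover have "real CARD('i) + real CARD('j) > 0" by (simp add: add_pos_pos)
  ultimately have c0: "c = 0" by simp
  have "t $ u = 0 $ u" for u using tl tr c0 by (cases u) auto
  then have "t = 0" by (simp add: vec_eq_iff)
  then have "w0 = Mv x" using st sx by simp
  then have "w0 $ Inl i = Mv x $ Inl i" "w0 $ Inr j = Mv x $ Inr j" for i j by simp_all
  then have "flowspec E a b x" using rg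
    by (simp add: flowspec_def w0_def Mv_def)
  thus ?thesis by blast
qed

lemma Psi_eq:
  assumes tree: "bip_tree E" and f: "flowspec E a b x"
  shows "Psi E a b = x"
  unfolding Psi_def
  by (rule the_equality) (use f flow_unique[of E a b] tree in \<open>auto simp: bip_tree_def flowspec_def\<close>)

lemma Psi_spec:
  assumes tree: "bip_tree E" and sab: "sum (\<lambda>i. a$i) UNIV = sum (\<lambda>j. b$j) UNIV"
  shows "flowspec E a b (Psi E a b)"
proof -
  obtain x where "flowspec E a b x" using flow_exists[of E a b] tree sab by (auto simp: bip_tree_def)
  thus ?thesis using Psi_eq[OF tree] by simp
qed

lemma swap_mult:
  fixes c :: "'a::finite \<Rightarrow> real" and f :: "'a \<Rightarrow> 'b::finite \<Rightarrow> real"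
  shows "(\<Sum>j\<in>UNIV. \<Sum>k\<in>UNIV. c k * f k j) = (\<Sum>k\<in>UNIV. c k * (\<Sum>j\<in>UNIV. f k j))"
  by (simp add: sum_distrib_left) (rule sum.swap)

lemma swap_mult2:
  fixes c :: "'a::finite \<Rightarrow> real" and f :: "'a \<Rightarrow> 'b \<Rightarrow> real"
  assumes "finite S"
  shows "(\<Sum>j\<in>S. m j * (\<Sum>k\<in>UNIV. c k * f k j)) = (\<Sum>k\<in>UNIV. c k * (\<Sum>j\<in>S. m j * f k j))"
proof -
  have "(\<Sum>j\<in>S. m j * (\<Sum>k\<in>UNIV. c k * f k j)) = (\<Sum>j\<in>S. \<Sum>k\<in>UNIV. c k * (m j * f k j))"
    by (simp add: sum_distrib_left mult.left_commute)
  also have "\<dots> = (\<Sum>k\<in>UNIV. \<Sum>j\<in>S. c k * (m j * f k j))" by (rule sum.swap)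
  also have "\<dots> = (\<Sum>k\<in>UNIV. c k * (\<Sum>j\<in>S. m j * f k j))" by (simp add: sum_distrib_left)
  finally show ?thesis .
qed

lemma sum_axis: "(\<Sum>i\<in>UNIV. (axis k (1::real) :: real^'n::finite) $ i) = 1"
  by (simp add: axis_def)

lemma sum_axis_mult: "(\<Sum>k\<in>UNIV. a $ k * ((axis k (1::real) :: real^'n::finite) $ i)) = a $ i"
  by (subst sum_single_UNIV[where j=i]) (auto simp: axis_def)

lemma sum_axis_mult2: "(\<Sum>k\<in>UNIV. a $ k * ((axis k (1::real) - axis jh 1 :: real^'n::finite) $ j))
   = a $ j - (\<Sum>k\<in>UNIV. a $ k) * (axis jh 1 :: real^'n) $ j"
  by (simp add: right_diff_distrib sum_subtractf sum_distrib_right[symmetric] sum_axis_mult)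

definition P1 :: "('i::finite \<times> 'j::finite) set \<Rightarrow> 'j \<Rightarrow> 'i \<Rightarrow> 'i \<Rightarrow> 'j \<Rightarrow> real" where
  "P1 E jh k = Psi E (axis k 1) (axis jh 1)"

definition P2 :: "('i::finite \<times> 'j::finite) set \<Rightarrow> 'j \<Rightarrow> 'j \<Rightarrow> 'i \<Rightarrow> 'j \<Rightarrow> real" where
  "P2 E jh j' = Psi E 0 (axis j' 1 - axis jh 1)"

lemma Psi_decomp:
  fixes E :: "('i::finite \<times> 'j::finite) set"
  assumes tree: "bip_tree E" and sab: "sum (\<lambda>i. a$i) UNIV = sum (\<lambda>j. b$j) UNIV"
  shows "Psi E a b = (\<lambda>i j. (\<Sum>k\<in>UNIV. a$k * P1 E jh k i j) + (\<Sum>j'\<in>UNIV. b$j' * P2 E jh j' i j))"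
proof (rule Psi_eq[OF tree])
  have f1: "flowspec E (axis k 1) (axis jh 1) (P1 E jh k)" for k
    unfolding P1_def by (rule Psi_spec[OF tree]) (simp add: sum_axis)
  have f2: "flowspec E 0 (axis j' 1 - axis jh 1) (P2 E jh j')" for j'
    unfolding P2_def by (rule Psi_spec[OF tree]) (simp add: sum_subtractf sum_axis)
  show "flowspec E a b (\<lambda>i j. (\<Sum>k\<in>UNIV. a$k * P1 E jh k i j) + (\<Sum>j'\<in>UNIV. b$j' * P2 E jh j' i j))"
    unfolding flowspec_def
  proof (intro conjI allI)
    show "in_RG E (\<lambda>i j. (\<Sum>k\<in>UNIV. a$k * P1 E jh k i j) + (\<Sum>j'\<in>UNIV. b$j' * P2 E jh j' i j))"
      using f1 f2 by (simp add: flowspec_def in_RG_def)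
  next
    fix i
    have "(\<Sum>j\<in>UNIV. (\<Sum>k\<in>UNIV. a$k * P1 E jh k i j) + (\<Sum>j'\<in>UNIV. b$j' * P2 E jh j' i j))
       = (\<Sum>k\<in>UNIV. a$k * (\<Sum>j\<in>UNIV. P1 E jh k i j)) + (\<Sum>j'\<in>UNIV. b$j' * (\<Sum>j\<in>UNIV. P2 E jh j' i j))"
      by (simp only: sum.distrib swap_mult)
    also have "\<dots> = a $ i" using f1 f2 by (simp add: flowspec_def sum_axis_mult)
    finally show "(\<Sum>j\<in>UNIV. (\<Sum>k\<in>UNIV. a$k * P1 E jh k i j) + (\<Sum>j'\<in>UNIV. b$j' * P2 E jh j' i j)) = a $ i" .
  next
    fix j
    have "(\<Sum>i\<in>UNIV. (\<Sum>k\<in>UNIV. a$k * P1 E jh k i j) + (\<Sum>j'\<in>UNIV. b$j' * P2 E jh j' i j))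
       = (\<Sum>k\<in>UNIV. a$k * (\<Sum>i\<in>UNIV. P1 E jh k i j)) + (\<Sum>j'\<in>UNIV. b$j' * (\<Sum>i\<in>UNIV. P2 E jh j' i j))"
      by (simp only: sum.distrib swap_mult)
    also have "\<dots> = (\<Sum>k\<in>UNIV. a$k * (axis jh 1 :: real^'j) $ j) + (\<Sum>j'\<in>UNIV. b$j' * (axis j' 1 - axis jh 1 :: real^'j) $ j)"
      using f1 f2 by (simp add: flowspec_def)
    also have "\<dots> = b $ j"
    proof -
      have "(\<Sum>j'\<in>UNIV. b$j' * (axis j' 1 - axis jh 1 :: real^'j) $ j) = b$j - (\<Sum>j'\<in>UNIV. b$j') * (axis jh 1 :: real^'j) $ j"
        by (rule sum_axis_mult2)
      moreover have "(\<Sum>k\<in>UNIV. a$k * (axis jh 1 :: real^'j) $ j) = (\<Sum>k\<in>UNIV. a$k) * (axis jh 1 :: real^'j) $ j"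
        by (simp add: sum_distrib_right)
      ultimately show ?thesis using sab by simp
    qed
    finally show "(\<Sum>i\<in>UNIV. (\<Sum>k\<in>UNIV. a$k * P1 E jh k i j) + (\<Sum>j'\<in>UNIV. b$j' * P2 E jh j' i j)) = b $ j" .
  qed
qed

definition B1c :: "('i::finite \<times> 'j::finite) set \<Rightarrow> ('i \<Rightarrow> 'j \<Rightarrow> real) \<Rightarrow> 'j \<Rightarrow> real^'i^'i" where
  "B1c E mu jh = (\<chi> i k. \<Sum>j\<in>{j. (i, j) \<in> E}. mu i j * P1 E jh k i j)"

definition B2c :: "('i::finite \<times> 'j::finite) set \<Rightarrow> ('i \<Rightarrow> 'j \<Rightarrow> real) \<Rightarrow> 'j \<Rightarrow> real^'j^'i" where
  "B2c E mu jh = (\<chi> i j'. \<Sum>j\<in>{j. (i, j) \<in> E}. mu i j * P2 E jh j' i j)"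

definition Bspec :: "('i::finite \<times> 'j::finite) set \<Rightarrow> ('i \<Rightarrow> 'j \<Rightarrow> real) \<Rightarrow> 'j
                     \<Rightarrow> (real^'i^'i) \<Rightarrow> (real^'j^'i) \<Rightarrow> bool" where
  "Bspec E mu jh B1 B2 = ((\<forall>i. B2 $ i $ jh = 0) \<and>
      (\<forall>a b. sum (\<lambda>i. a $ i) UNIV = sum (\<lambda>j. b $ j) UNIV \<longrightarrow>
         (\<forall>i. (\<Sum>j\<in>{j. (i, j) \<in> E}. mu i j * Psi E a b i j) = (B1 *v a + B2 *v b) $ i)))"

lemma Psi_zero: "bip_tree E \<Longrightarrow> Psi E 0 0 = (\<lambda>i j. 0)"
  by (rule Psi_eq) (auto simp: flowspec_def in_RG_def)

lemma Bc_spec: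
  fixes E :: "('i::finite \<times> 'j::finite) set"
  assumes tree: "bip_tree E"
  shows "Bspec E mu jh (B1c E mu jh) (B2c E mu jh)"
  unfolding Bspec_def
proof (intro conjI allI impI)
  fix i
  show "B2c E mu jh $ i $ jh = 0"
    using Psi_zero[OF tree] by (simp add: B2c_def P2_def)
next
  fix a :: "real^'i" and b :: "real^'j" and i
  assume sab: "sum (\<lambda>i. a $ i) UNIV = sum (\<lambda>j. b $ j) UNIV"
  have fin: "finite {j. (i, j) \<in> E}" by simp
  have "(\<Sum>j\<in>{j. (i, j) \<in> E}. mu i j * Psi E a b i j)
      = (\<Sum>j\<in>{j. (i, j) \<in> E}. mu i j * (\<Sum>k\<in>UNIV. a$k * P1 E jh k i j))
       + (\<Sum>j\<in>{j. (i, j) \<in> E}. mu i j * (\<Sum>j'\<in>UNIV. b$j' * P2 E jh j' i j))"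
    by (simp add: Psi_decomp[OF tree sab, where jh=jh] distrib_left sum.distrib)
  also have "\<dots> = (\<Sum>k\<in>UNIV. a$k * (\<Sum>j\<in>{j. (i, j) \<in> E}. mu i j * P1 E jh k i j))
       + (\<Sum>j'\<in>UNIV. b$j' * (\<Sum>j\<in>{j. (i, j) \<in> E}. mu i j * P2 E jh j' i j))"
    by (simp only: swap_mult2[OF fin])
  also have "\<dots> = (B1c E mu jh *v a + B2c E mu jh *v b) $ i"
    by (simp add: B1c_def B2c_def matrix_vector_mult_def mult.commute)
  finally show "(\<Sum>j\<in>{j. (i, j) \<in> E}. mu i j * Psi E a b i j) = (B1c E mu jh *v a + B2c E mu jh *v b) $ i" .
qed

lemma mv_axis: "((A::real^'n::finite^'m::finite) *v axis k 1) $ i = A $ i $ k"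
  unfolding matrix_vector_mult_def by (subst sum_single_UNIV[where j=k]) (auto simp: axis_def)

lemma Bspec_unique:
  fixes E :: "('i::finite \<times> 'j::finite) set"
  assumes tree: "bip_tree E" and sp: "Bspec E mu jh B1 B2"
  shows "B1 = B1c E mu jh \<and> B2 = B2c E mu jh"
proof -
  have sc: "Bspec E mu jh (B1c E mu jh) (B2c E mu jh)" by (rule Bc_spec[OF tree])
  have sp2: "\<And>(a::real^'i) (b::real^'j) i. sum (\<lambda>i. a $ i) UNIV = sum (\<lambda>j. b $ j) UNIV \<Longrightarrow>
      (\<Sum>j\<in>{j. (i, j) \<in> E}. mu i j * Psi E a b i j) = (B1 *v a + B2 *v b) $ i"
    using sp by (simp add: Bspec_def)
  have sc2: "\<And>(a::real^'i) (b::real^'j) i. sum (\<lambda>i. a $ i) UNIV = sum (\<lambda>j. b $ j) UNIV \<Longrightarrow>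
      (\<Sum>j\<in>{j. (i, j) \<in> E}. mu i j * Psi E a b i j) = (B1c E mu jh *v a + B2c E mu jh *v b) $ i"
    using sc by (simp add: Bspec_def)
  have z1: "B2 $ i $ jh = 0" "B2c E mu jh $ i $ jh = 0" for i
    using sp sc by (auto simp: Bspec_def)
  have e1: "B1 $ i $ k = B1c E mu jh $ i $ k" for i k
  proof -
    have s: "sum (\<lambda>i. (axis k 1 :: real^'i) $ i) UNIV = sum (\<lambda>j. (axis jh 1 :: real^'j) $ j) UNIV"
      by (simp add: sum_axis)
    have "(B1 *v axis k 1 + B2 *v axis jh 1) $ i = (B1c E mu jh *v axis k 1 + B2c E mu jh *v axis jh 1) $ i"
      using sp2[OF s, of i] sc2[OF s, of i] by simp
    thus ?thesis using z1 by (simp add: mv_axis)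
  qed
  have e2: "B2 $ i $ j' = B2c E mu jh $ i $ j'" for i j'
  proof -
    have s: "sum (\<lambda>i. (0 :: real^'i) $ i) UNIV = sum (\<lambda>j. (axis j' 1 - axis jh 1 :: real^'j) $ j) UNIV"
      by (simp add: sum_axis sum_subtractf)
    have "(B1 *v 0 + B2 *v (axis j' 1 - axis jh 1)) $ i = (B1c E mu jh *v 0 + B2c E mu jh *v (axis j' 1 - axis jh 1)) $ i"
      using sp2[OF s, of i] sc2[OF s, of i] by simp
    thus ?thesis using z1 by (simp add: mv_axis matrix_vector_mult_diff_distrib)
  qed
  show ?thesis using e1 e2 by (simp add: vec_eq_iff)
qed

lemma Bmats_eq:
  assumes tree: "bip_tree E"
  shows "Bmats E mu jh = (B1c E mu jh, B2c E mu jh)"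
proof -
  have "Bmats E mu jh = (THE p. case p of (B1, B2) \<Rightarrow> Bspec E mu jh B1 B2)"
    by (simp add: Bmats_def Bspec_def)
  also have "\<dots> = (B1c E mu jh, B2c E mu jh)"
  proof (rule the_equality)
    show "case (B1c E mu jh, B2c E mu jh) of (B1, B2) \<Rightarrow> Bspec E mu jh B1 B2"
      using Bc_spec[OF tree] by simp
    fix p assume "case p of (B1, B2) \<Rightarrow> Bspec E mu jh B1 B2"
    then show "p = (B1c E mu jh, B2c E mu jh)"
      using Bspec_unique[OF tree] by (cases p) auto
  qed
  finally show ?thesis .
qed

lemma B_apply:
  assumes tree: "bip_tree E" and f: "flowspec E a b x"
  shows "(\<Sum>j\<in>{j. (i, j) \<in> E}. mu i j * x i j) = (B1mat E mu jh *v a + snd (Bmats E mu jh) *v b) $ i"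
proof -
  have "sum (\<lambda>i. a $ i) UNIV = (\<Sum>i\<in>UNIV. \<Sum>j\<in>UNIV. x i j)" using f by (simp add: flowspec_def)
  also have "\<dots> = (\<Sum>j\<in>UNIV. \<Sum>i\<in>UNIV. x i j)" by (rule sum.swap)
  also have "\<dots> = sum (\<lambda>j. b $ j) UNIV" using f by (simp add: flowspec_def)
  finally have sab: "sum (\<lambda>i. a $ i) UNIV = sum (\<lambda>j. b $ j) UNIV" .
  have "(\<Sum>j\<in>{j. (i, j) \<in> E}. mu i j * Psi E a b i j) = (B1c E mu jh *v a + B2c E mu jh *v b) $ i"
    using Bc_spec[OF tree, of mu jh] sab by (simp add: Bspec_def)
  then show ?thesis by (simp add: Psi_eq[OF tree f] B1mat_def Bmats_eq[OF tree])
qed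

lemma B2_jh: "bip_tree E \<Longrightarrow> snd (Bmats E mu jh) $ i $ jh = 0"
  using Bc_spec[of E mu jh] by (simp add: Bmats_eq Bspec_def)

lemma rg_sum_col:
  "in_RG E x \<Longrightarrow> (\<Sum>i\<in>{i. (i,j)\<in>E}. x i j) = (\<Sum>i\<in>(UNIV::'i::finite set). x i j)"
  by (rule sum.mono_neutral_left) (auto simp: in_RG_def)

lemma rg_sum_row_w:
  "in_RG E x \<Longrightarrow> (\<Sum>j\<in>{j. (i,j)\<in>E}. m j * x i j) = (\<Sum>j\<in>(UNIV::'j::finite set). m j * x i j)"
  by (rule sum.mono_neutral_left) (auto simp: in_RG_def)

lemma mv_axis_c: "((A::real^'n::finite^'m::finite) *v (c *\<^sub>R axis k 1)) $ i = c * A $ i $ k"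
  unfolding matrix_vector_mult_def by (subst sum_single_UNIV[where j=k]) (auto simp: axis_def)

lemma inner_ones: "((\<chi> i. 1) :: real^'n::finite) \<bullet> d = sum (\<lambda>i. d $ i) UNIV"
  by (simp add: inner_vec_def)

lemma B1_inv:
  fixes E :: "('i::finite \<times> 'j::finite) set"
  assumes tree: "bip_tree E" and mupos: "\<And>i j. (i,j) \<in> E \<Longrightarrow> mu i j > 0"
  shows "invertible (B1mat E mu jh)"
proof -
  let ?B1 = "B1mat E mu jh" and ?B2 = "snd (Bmats E mu jh)"
  have "\<forall>d. ?B1 *v d = 0 \<longrightarrow> d = 0"
  proof (intro allI impI)
    fix d :: "real^'i" assume d0: "?B1 *v d = 0"
    define b :: "real^'j" where "b = (sum (\<lambda>i. d$i) UNIV) *\<^sub>R axis jh 1"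
    have sab: "sum (\<lambda>i. d $ i) UNIV = sum (\<lambda>j. b $ j) UNIV"
      by (simp add: b_def sum_distrib_left[symmetric] sum_axis)
    define x where "x = Psi E d b"
    have f: "flowspec E d b x" unfolding x_def by (rule Psi_spec[OF tree sab])
    have rows: "(\<Sum>j\<in>UNIV. (if (i,j)\<in>E then mu i j else 0) * x i j) = 0" for i
    proof -
      have "(\<Sum>j\<in>UNIV. (if (i,j)\<in>E then mu i j else 0) * x i j) = (\<Sum>j\<in>UNIV. if (i,j)\<in>E then mu i j * x i j else 0)"
        by (rule sum.cong) auto
      also have "\<dots> = (\<Sum>j\<in>{j\<in>UNIV. (i,j)\<in>E}. mu i j * x i j)"
        by (rule sum.inter_filter[symmetric]) simp
      also have "\<dots> = (\<Sum>j\<in>{j. (i, j) \<in> E}. mu i j * x i j)" by simp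
      also have "\<dots> = (?B1 *v d + ?B2 *v b) $ i" by (rule B_apply[OF tree f])
      also have "\<dots> = 0" using d0 B2_jh[OF tree] by (simp add: b_def mv_axis_c)
      finally show ?thesis .
    qed
    have x0: "x i j = 0" for i j
    proof (rule flow_zero[where jh=jh])
      show "bip_acyclic E" using tree by (simp add: bip_tree_def)
      show "in_RG E x" using f by (simp add: flowspec_def)
      show "\<And>i j. (i, j) \<in> E \<Longrightarrow> (if (i,j)\<in>E then mu i j else 0) \<noteq> 0" using mupos
        by (metis less_irrefl)
      show "\<And>i. (\<Sum>j\<in>UNIV. (if (i,j)\<in>E then mu i j else 0) * x i j) = 0" by (rule rows)
      show "\<And>j. j \<noteq> jh \<Longrightarrow> (\<Sum>i\<in>UNIV. x i j) = 0"
        using f by (simp add: flowspec_def b_def axis_def)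
    qed
    show "d = 0" using f x0 by (simp add: flowspec_def vec_eq_iff)
  qed
  then show ?thesis
    by (simp add: invertible_left_inverse matrix_left_invertible_ker)
qed

lemma swss_gen:
  fixes E :: "('i::finite \<times> 'j::finite) set" and mu :: "'i \<Rightarrow> 'j \<Rightarrow> real"
    and lh hh p :: "'i \<Rightarrow> real" and th :: "'j \<Rightarrow> real" and k0 :: "'i \<Rightarrow> 'j \<Rightarrow> real"
  assumes tree: "bip_tree E" and mupos: "\<And>i j. (i,j) \<in> E \<Longrightarrow> mu i j > 0"
    and k0rg: "in_RG E k0"
    and k0col: "\<And>j. (\<Sum>i\<in>{i. (i,j)\<in>E}. k0 i j) = th j"
    and k0row: "\<And>i. (\<Sum>j\<in>{j. (i,j)\<in>E}. mu i j * k0 i j) = lh i - hh i"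
    and ppos: "\<And>i. p i > 0"
  shows "swss_opt_value E lh mu th p
     (- (((\<chi> i. 1) :: real^'i) \<bullet> (matrix_inv (B1mat E mu jh) *v (\<chi> i. hh i)))
        / (((\<chi> i. 1) :: real^'i) \<bullet> (matrix_inv (B1mat E mu jh) *v (\<chi> i. p i))))"
proof -
  define B1 where "B1 = B1mat E mu jh"
  define B2 where "B2 = snd (Bmats E mu jh)"
  define A where "A = matrix_inv B1"
  define e :: "real^'i" where "e = (\<chi> i. 1)"
  have inv: "invertible B1" unfolding B1_def by (rule B1_inv[OF tree mupos])
  have AB: "B1 ** A = mat 1 \<and> A ** B1 = mat 1"
    using inv unfolding A_def matrix_inv_def invertible_def by (rule someI_ex)
  define y where "y = e v* A"
  define g where "g = y v* B2"
  have Y1: "y \<bullet> z = e \<bullet> (A *v z)" for z unfolding y_def by (rule dot_lmul_matrix)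
  have Y2: "y \<bullet> (B1 *v d) = sum (\<lambda>i. d $ i) UNIV" for d
    using AB by (simp add: Y1 matrix_vector_mul_assoc e_def inner_ones)
  have Y3: "y \<bullet> (B2 *v b) = g \<bullet> b" for b unfolding g_def by (rule dot_lmul_matrix[symmetric])
  have gjh: "g $ jh = 0" using B2_jh[OF tree] by (simp add: g_def B2_def vector_matrix_mult_def)
  have Bap: "\<And>a b x i. flowspec E a b x \<Longrightarrow>
     (\<Sum>j\<in>{j. (i, j) \<in> E}. mu i j * x i j) = (B1 *v a + B2 *v b) $ i"
    unfolding B1_def B2_def by (rule B_apply[OF tree])
  have edgeid: "mu i j * y $ i = 1 + g $ j" if ij: "(i,j) \<in> E" for i j
  proof -
    define x where "x = (\<lambda>i' j'. if i' = i \<and> j' = j then (1::real) else 0)"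
    have f: "flowspec E (axis i 1) (axis j 1) x"
      unfolding flowspec_def
    proof (intro conjI allI)
      show "in_RG E x" using ij by (auto simp: in_RG_def x_def)
      fix i' show "(\<Sum>j'\<in>UNIV. x i' j') = axis i 1 $ i'" by (simp add: x_def axis_def)
    next
      fix j' show "(\<Sum>i'\<in>UNIV. x i' j') = axis j 1 $ j'" by (simp add: x_def axis_def)
    qed
    have "B1 *v axis i 1 + B2 *v axis j 1 = mu i j *\<^sub>R axis i 1"
    proof (subst vec_eq_iff, intro allI)
      fix i'
      have "(B1 *v axis i 1 + B2 *v axis j 1) $ i' = (\<Sum>j'\<in>{j'. (i', j') \<in> E}. mu i' j' * x i' j')"
        using Bap[OF f] by simp
      also have "\<dots> = (mu i j *\<^sub>R axis i 1) $ i'"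
      proof (cases "i' = i")
        case True
        have "(\<Sum>j'\<in>{j'. (i', j') \<in> E}. mu i' j' * x i' j') = (\<Sum>j'\<in>{j'. (i', j') \<in> E}. if j' = j then mu i j else 0)"
          using True by (intro sum.cong) (auto simp: x_def)
        also have "\<dots> = mu i j" using ij True by simp
        finally show ?thesis using True by (simp add: axis_def)
      next
        case False thus ?thesis by (simp add: x_def axis_def)
      qed
      finally show "(B1 *v axis i 1 + B2 *v axis j 1) $ i' = (mu i j *\<^sub>R axis i 1) $ i'" .
    qed
    then have "y \<bullet> (B1 *v axis i 1 + B2 *v axis j 1) = y \<bullet> (mu i j *\<^sub>R axis i 1)" by simp
    then show ?thesis
      by (simp add: inner_add_right Y2 Y3 sum_axis inner_axis)
  qed
  define P where "P u = (case u of Inl i \<Rightarrow> y $ i > 0 | Inr j \<Rightarrow> 1 + g $ j > 0)" for u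
  have Pall: "P u" for u
  proof (rule conn_prop[of E P "Inr jh"])
    show "bip_connected E" using tree by (simp add: bip_tree_def)
    show "P (Inr jh)" by (simp add: P_def gjh)
    fix u v assume uv: "badj E u v" and Pu: "P u"
    show "P v"
    proof (cases u; cases v)
      fix i j assume uu: "u = Inl i" and vv: "v = Inr j"
      then have ij: "(i,j)\<in>E" "y$i > 0" using uv Pu by (auto simp: badj_def P_def)
      have "mu i j * y $ i > 0" using ij mupos[OF ij(1)] by simp
      then show ?thesis using edgeid[OF ij(1)] vv by (simp add: P_def)
    next
      fix i j assume uu: "u = Inr j" and vv: "v = Inl i"
      then have ij: "(i,j)\<in>E" "1 + g$j > 0" using uv Pu by (auto simp: badj_def P_def)
      then have "mu i j * y $ i > 0" using edgeid[OF ij(1)] by simp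
      then show ?thesis using mupos[OF ij(1)] vv by (simp add: P_def zero_less_mult_iff)
    qed (use uv in \<open>auto simp: badj_def\<close>)
  qed
  have ypos: "y $ i > 0" for i using Pall[of "Inl i"] by (simp add: P_def)
  have dotf: "y \<bullet> (\<chi> i. f i) = (\<Sum>i\<in>UNIV. y $ i * f i)" for f by (simp add: inner_vec_def)
  define C where "C = sum th UNIV + g \<bullet> (\<chi> j. th j)"
  have Kid: "(\<Sum>i\<in>UNIV. y $ i * (\<Sum>j\<in>{j. (i,j)\<in>E}. mu i j * k i j)) = C"
    if krg: "in_RG E k" and kcol: "\<And>j. (\<Sum>i\<in>{i. (i,j)\<in>E}. k i j) = th j" for k
  proof -
    define al :: "real^'i" where "al = (\<chi> i. \<Sum>j\<in>UNIV. k i j)"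
    define be :: "real^'j" where "be = (\<chi> j. th j)"
    have kc: "(\<Sum>i\<in>UNIV. k i j) = th j" for j using kcol[of j] rg_sum_col[OF krg, of j] by simp
    have f: "flowspec E al be k" using krg kc by (simp add: flowspec_def al_def be_def)
    have "(\<chi> i. \<Sum>j\<in>{j. (i,j)\<in>E}. mu i j * k i j) = B1 *v al + B2 *v be"
      using Bap[OF f] by (simp add: vec_eq_iff)
    then have "y \<bullet> (\<chi> i. \<Sum>j\<in>{j. (i,j)\<in>E}. mu i j * k i j) = sum (\<lambda>i. al $ i) UNIV + g \<bullet> be"
      by (simp add: inner_add_right Y2 Y3)
    moreover have "sum (\<lambda>i. al $ i) UNIV = sum th UNIV"
    proof -
      have "sum (\<lambda>i. al $ i) UNIV = (\<Sum>i\<in>UNIV. \<Sum>j\<in>UNIV. k i j)" by (simp add: al_def)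
      also have "\<dots> = (\<Sum>j\<in>UNIV. \<Sum>i\<in>UNIV. k i j)" by (rule sum.swap)
      also have "\<dots> = sum th UNIV" by (simp add: kc)
      finally show ?thesis .
    qed
    ultimately show ?thesis by (simp add: C_def be_def dotf)
  qed
  define yl where "yl = (\<Sum>i\<in>UNIV. y $ i * lh i)"
  define yh where "yh = (\<Sum>i\<in>UNIV. y $ i * hh i)"
  define yp where "yp = (\<Sum>i\<in>UNIV. y $ i * p i)"
  have ypp: "yp > 0" unfolding yp_def using ypos ppos by (intro sum_pos) auto
  have k0C: "yl - yh = C"
  proof -
    have "C = (\<Sum>i\<in>UNIV. y $ i * (lh i - hh i))" using Kid[OF k0rg k0col] by (simp add: k0row)
    thus ?thesis by (simp add: yl_def yh_def right_diff_distrib sum_subtractf)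
  qed
  define V where "V = - yh / yp"
  have Veq: "- (((\<chi> i. 1) :: real^'i) \<bullet> (matrix_inv (B1mat E mu jh) *v (\<chi> i. hh i)))
        / (((\<chi> i. 1) :: real^'i) \<bullet> (matrix_inv (B1mat E mu jh) *v (\<chi> i. p i))) = V"
    using Y1[of "\<chi> i. hh i"] Y1[of "\<chi> i. p i"]
    by (simp add: V_def yh_def yp_def dotf A_def B1_def e_def)
  have upper: "w \<le> V" if fw: "swss_feasible E lh mu th p w" for w
  proof -
    from fw obtain k where krg: "in_RG E k"
      and kle: "\<And>i. lh i \<le> (\<Sum>j\<in>{j. (i, j) \<in> E}. mu i j * k i j) - w * p i"
      and kcol: "\<And>j. (\<Sum>i\<in>{i. (i, j) \<in> E}. k i j) = th j"
      unfolding swss_feasible_def by blast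
    have "(\<Sum>i\<in>UNIV. y $ i * (lh i + w * p i)) \<le> (\<Sum>i\<in>UNIV. y $ i * (\<Sum>j\<in>{j. (i,j)\<in>E}. mu i j * k i j))"
      using kle ypos by (intro sum_mono mult_left_mono) (auto simp: less_imp_le algebra_simps)
    also have "\<dots> = C" by (rule Kid[OF krg kcol])
    finally have "yl + w * yp \<le> yl - yh" using k0C
      by (simp add: yl_def yp_def distrib_left sum.distrib sum_distrib_left mult.left_commute)
    then have "w * yp \<le> - yh" by simp
    then have "w \<le> (- yh) / yp" by (subst pos_le_divide_eq[OF ypp])
    thus ?thesis by (simp add: V_def)
  qed
  have feas: "swss_feasible E lh mu th p V"
  proof -
    define r :: "real^'i" where "r = (\<chi> i. hh i + V * p i)"
    define d where "d = A *v r"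
    have Bd: "B1 *v d = r" using AB by (simp add: d_def matrix_vector_mul_assoc)
    have "sum (\<lambda>i. d $ i) UNIV = y \<bullet> r" using Y2[of d] Bd by simp
    also have "\<dots> = yh + V * yp"
      by (simp add: r_def dotf yh_def yp_def distrib_left sum.distrib sum_distrib_left mult.left_commute)
    also have "\<dots> = 0" using ypp by (simp add: V_def)
    finally have sd: "sum (\<lambda>i. d $ i) UNIV = sum (\<lambda>j. (0::real^'j) $ j) UNIV" by simp
    define dl where "dl = Psi E d 0"
    have fd: "flowspec E d 0 dl" unfolding dl_def by (rule Psi_spec[OF tree sd])
    have drow: "(\<Sum>j\<in>{j. (i, j) \<in> E}. mu i j * dl i j) = hh i + V * p i" for i
      using Bap[OF fd, of i] Bd by (simp add: r_def)
    have dcol: "(\<Sum>i\<in>{i. (i, j) \<in> E}. dl i j) = 0" for j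
      using fd rg_sum_col[of E dl j] by (simp add: flowspec_def)
    show ?thesis unfolding swss_feasible_def
    proof (intro exI[where x="\<lambda>i j. k0 i j + dl i j"] conjI allI)
      show "in_RG E (\<lambda>i j. k0 i j + dl i j)" using k0rg fd by (simp add: in_RG_def flowspec_def)
      fix i
      have "(\<Sum>j\<in>{j. (i, j) \<in> E}. mu i j * (k0 i j + dl i j)) = lh i - hh i + (hh i + V * p i)"
        using k0row[of i] drow[of i] by (simp add: distrib_left sum.distrib)
      then show "lh i \<le> (\<Sum>j\<in>{j. (i, j) \<in> E}. mu i j * (k0 i j + dl i j)) - V * p i" by simp
    next
      fix j
      show "(\<Sum>i\<in>{i. (i, j) \<in> E}. k0 i j + dl i j) = th j"
        using k0col[of j] dcol[of j] by (simp add: sum.distrib)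
    qed
  qed
  show ?thesis unfolding Veq swss_opt_value_def using feas upper by blast
qed

lemma alg: fixes s n NN m x u v :: real
  assumes "0 < s" and "n = s * s" and "0 < m"
  shows "m * (x * (s * (NN / n - v)) + (s * (m - u)) / m * (x * v)) = (m * x * NN - n * u * v * x) / s"
  using assms by (simp add: field_simps)

theorem theorem4:
  fixes E :: "('i::finite \<times> 'j::finite) set"
    and lamn :: "nat \<Rightarrow> 'i \<Rightarrow> real" and mun :: "nat \<Rightarrow> 'i \<Rightarrow> 'j \<Rightarrow> real"
    and Nn :: "nat \<Rightarrow> 'j \<Rightarrow> nat"
    and lam :: "'i \<Rightarrow> real" and mu :: "'i \<Rightarrow> 'j \<Rightarrow> real" and nu :: "'j \<Rightarrow> real"
    and lamh :: "'i \<Rightarrow> real" and muh :: "'i \<Rightarrow> 'j \<Rightarrow> real" and nuh :: "'j \<Rightarrow> real"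
    and xs :: "'i \<Rightarrow> 'j \<Rightarrow> real"
    and ih :: 'i and jh :: 'j
  assumes tree: "bip_tree E"
    and lamn_pos: "\<And>n i. lamn n i > 0"
    and mun_pos: "\<And>n i j. (i, j) \<in> E \<Longrightarrow> mun n i j > 0"
    and lam_lim: "\<And>i. (\<lambda>n. lamn n i / real n) \<longlonglongrightarrow> lam i"
    and lam_pos: "\<And>i. lam i > 0"
    and N_lim: "\<And>j. (\<lambda>n. real (Nn n j) / real n) \<longlonglongrightarrow> nu j"
    and nu_pos: "\<And>j. nu j > 0"
    and mu_lim: "\<And>i j. (i, j) \<in> E \<Longrightarrow> (\<lambda>n. mun n i j) \<longlonglongrightarrow> mu i j"
    and mu_pos: "\<And>i j. (i, j) \<in> E \<Longrightarrow> mu i j > 0"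
    and lamh_lim: "\<And>i. (\<lambda>n. (lamn n i - real n * lam i) / sqrt (real n)) \<longlonglongrightarrow> lamh i"
    and muh_lim: "\<And>i j. (i, j) \<in> E \<Longrightarrow>
                   (\<lambda>n. sqrt (real n) * (mun n i j - mu i j)) \<longlonglongrightarrow> muh i j"
    and nuh_lim: "\<And>j. (\<lambda>n. sqrt (real n) * (real (Nn n j) / real n - nu j)) \<longlonglongrightarrow> nuh j"
    and crp: "crp_unique_solution E mu nu lam xs"
    and xs_colsum: "\<And>j. (\<Sum>i\<in>UNIV. xs i j) = 1"
    and xs_pos: "\<And>i j. (i, j) \<in> E \<Longrightarrow> xs i j > 0"
    and edge: "(ih, jh) \<in> E"
  shows
   "let z = (\<lambda>i j. xs i j * nu j);
        theta = (\<lambda>j. nuh j + (\<Sum>i\<in>{i. (i, j) \<in> E}. (muh i j / mu i j) * z i j));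
        lamhn = (\<lambda>n i. (lamn n i - real n * lam i) / sqrt (real n));
        muhn = (\<lambda>n i j. sqrt (real n) * (mun n i j - mu i j));
        nuhn = (\<lambda>n j. sqrt (real n) * (real (Nn n j) / real n - nu j));
        thetan = (\<lambda>n j. nuhn n j
                   + (\<Sum>i\<in>{i. (i, j) \<in> E}. (muhn n i j / mun n i j) * z i j));
        h = (\<lambda>i. lamh i - (\<Sum>j\<in>{j. (i, j) \<in> E}. mu i j * xs i j * nuh j + muh i j * z i j));
        hn = (\<lambda>n i. (lamn n i - (\<Sum>j\<in>{j. (i, j) \<in> E}. mun n i j * xs i j * real (Nn n j)))
                     / sqrt (real n));
        B1 = B1mat E mu jh;
        Bn1 = (\<lambda>n. B1mat E (mun n) jh);
        e = ((\<chi> i. 1) :: real^'i)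
    in invertible B1 \<and> (\<forall>n\<ge>1. invertible (Bn1 n)) \<and>
       (\<forall>p :: 'i \<Rightarrow> real. (\<forall>i. p i > 0) \<and> (\<Sum>i\<in>UNIV. p i) = 1 \<longrightarrow>
          swss_opt_value E lamh mu theta p
            (- (e \<bullet> (matrix_inv B1 *v (\<chi> i. h i))) / (e \<bullet> (matrix_inv B1 *v (\<chi> i. p i))))
          \<and> (\<forall>n\<ge>1. swss_opt_value E (lamhn n) (mun n) (thetan n) p
            (- (e \<bullet> (matrix_inv (Bn1 n) *v (\<chi> i. hn n i)))
               / (e \<bullet> (matrix_inv (Bn1 n) *v (\<chi> i. p i))))))"
proof -
  from crp have xsf: "crp_feasible E mu nu lam xs"
    by (simp add: crp_unique_solution_def crp_optimal_def)
  then have xsrg: "in_RG E xs"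
    and lamdef: "\<And>i. (\<Sum>j\<in>{j. (i,j)\<in>E}. mu i j * nu j * xs i j) = lam i"
    by (auto simp: crp_feasible_def)
  have xscol: "(\<Sum>i\<in>{i. (i,j)\<in>E}. xs i j) = 1" for j
    using xs_colsum[of j] rg_sum_col[OF xsrg, of j] by simp
  have inv1: "invertible (B1mat E mu jh)" by (rule B1_inv[OF tree mu_pos])
  have inv2: "invertible (B1mat E (mun n) jh)" for n by (rule B1_inv[OF tree mun_pos])
  define K1 where "K1 = (\<lambda>i j. if (i,j)\<in>E then xs i j * nuh j + muh i j / mu i j * (xs i j * nu j) else 0)"
  have K1rg: "in_RG E K1" by (simp add: in_RG_def K1_def)
  have K1col: "(\<Sum>i\<in>{i. (i,j)\<in>E}. K1 i j) = nuh j + (\<Sum>i\<in>{i. (i, j) \<in> E}. muh i j / mu i j * (xs i j * nu j))" for j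
  proof -
    have "(\<Sum>i\<in>{i. (i,j)\<in>E}. K1 i j) = (\<Sum>i\<in>{i. (i,j)\<in>E}. xs i j * nuh j + muh i j / mu i j * (xs i j * nu j))"
      by (rule sum.cong) (auto simp: K1_def)
    also have "\<dots> = (\<Sum>i\<in>{i. (i,j)\<in>E}. xs i j) * nuh j + (\<Sum>i\<in>{i. (i, j) \<in> E}. muh i j / mu i j * (xs i j * nu j))"
      by (simp add: sum.distrib sum_distrib_right)
    finally show ?thesis by (simp add: xscol)
  qed
  have K1row: "(\<Sum>j\<in>{j. (i,j)\<in>E}. mu i j * K1 i j) = lamh i - (lamh i - (\<Sum>j\<in>{j. (i, j) \<in> E}. mu i j * xs i j * nuh j + muh i j * (xs i j * nu j)))" for i
  proof -
    have "(\<Sum>j\<in>{j. (i,j)\<in>E}. mu i j * K1 i j) = (\<Sum>j\<in>{j. (i, j) \<in> E}. mu i j * xs i j * nuh j + muh i j * (xs i j * nu j))"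
    proof (rule sum.cong)
      fix j assume "j \<in> {j. (i,j)\<in>E}"
      then have "(i,j)\<in>E" by simp
      then show "mu i j * K1 i j = mu i j * xs i j * nuh j + muh i j * (xs i j * nu j)"
        using mu_pos[of i j] by (simp add: K1_def field_simps)
    qed simp
    then show ?thesis by simp
  qed
  have part1: "swss_opt_value E lamh mu (\<lambda>j. nuh j + (\<Sum>i\<in>{i. (i, j) \<in> E}. muh i j / mu i j * (xs i j * nu j))) p
      (- (((\<chi> i. 1) :: real^'i) \<bullet> (matrix_inv (B1mat E mu jh) *v (\<chi> i. lamh i - (\<Sum>j\<in>{j. (i, j) \<in> E}. mu i j * xs i j * nuh j + muh i j * (xs i j * nu j)))))
        / (((\<chi> i. 1) :: real^'i) \<bullet> (matrix_inv (B1mat E mu jh) *v (\<chi> i. p i))))"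
    if pp: "\<And>i. p i > 0" for p
    by (rule swss_gen[OF tree mu_pos K1rg K1col K1row pp])
  define K2 where "K2 = (\<lambda>n i j. if (i,j)\<in>E then xs i j * (sqrt (real n) * (real (Nn n j) / real n - nu j))
        + sqrt (real n) * (mun n i j - mu i j) / mun n i j * (xs i j * nu j) else 0)"
  have K2rg: "in_RG E (K2 n)" for n by (simp add: in_RG_def K2_def)
  have K2col: "(\<Sum>i\<in>{i. (i,j)\<in>E}. K2 n i j) = sqrt (real n) * (real (Nn n j) / real n - nu j)
     + (\<Sum>i\<in>{i. (i, j) \<in> E}. sqrt (real n) * (mun n i j - mu i j) / mun n i j * (xs i j * nu j))" for n j
  proof -
    have "(\<Sum>i\<in>{i. (i,j)\<in>E}. K2 n i j) = (\<Sum>i\<in>{i. (i,j)\<in>E}. xs i j * (sqrt (real n) * (real (Nn n j) / real n - nu j))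
        + sqrt (real n) * (mun n i j - mu i j) / mun n i j * (xs i j * nu j))"
      by (rule sum.cong) (auto simp: K2_def)
    also have "\<dots> = (\<Sum>i\<in>{i. (i,j)\<in>E}. xs i j) * (sqrt (real n) * (real (Nn n j) / real n - nu j))
        + (\<Sum>i\<in>{i. (i, j) \<in> E}. sqrt (real n) * (mun n i j - mu i j) / mun n i j * (xs i j * nu j))"
      by (simp only: sum.distrib sum_distrib_right)
    finally show ?thesis by (simp add: xscol)
  qed
  have K2row: "(\<Sum>j\<in>{j. (i,j)\<in>E}. mun n i j * K2 n i j) = (lamn n i - real n * lam i) / sqrt (real n)
     - (lamn n i - (\<Sum>j\<in>{j. (i, j) \<in> E}. mun n i j * xs i j * real (Nn n j))) / sqrt (real n)"
    if n1: "n \<ge> 1" for n i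
  proof -
    define s where "s = sqrt (real n)"
    have s0: "0 < s" using n1 by (simp add: s_def)
    have ns: "real n = s * s" by (simp add: s_def)
    have "(\<Sum>j\<in>{j. (i,j)\<in>E}. mun n i j * K2 n i j)
        = (\<Sum>j\<in>{j. (i,j)\<in>E}. (mun n i j * xs i j * real (Nn n j) - real n * (mu i j * nu j * xs i j)) / s)"
    proof (rule sum.cong)
      fix j assume "j \<in> {j. (i,j)\<in>E}"
      then have ij: "(i,j)\<in>E" by simp
      have "mun n i j * (xs i j * (s * (real (Nn n j) / real n - nu j)) + s * (mun n i j - mu i j) / mun n i j * (xs i j * nu j))
          = (mun n i j * xs i j * real (Nn n j) - real n * mu i j * nu j * xs i j) / s"
        by (rule alg[OF s0 ns mun_pos[OF ij]])
      then show "mun n i j * K2 n i j = (mun n i j * xs i j * real (Nn n j) - real n * (mu i j * nu j * xs i j)) / s"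
        using ij by (simp add: K2_def s_def mult.assoc)
    qed simp
    also have "\<dots> = ((\<Sum>j\<in>{j. (i,j)\<in>E}. mun n i j * xs i j * real (Nn n j)) - real n * (\<Sum>j\<in>{j. (i,j)\<in>E}. mu i j * nu j * xs i j)) / s"
      by (simp add: sum_divide_distrib[symmetric] sum_subtractf sum_distrib_left)
    also have "\<dots> = (lamn n i - real n * lam i) / s - (lamn n i - (\<Sum>j\<in>{j. (i, j) \<in> E}. mun n i j * xs i j * real (Nn n j))) / s"
      unfolding lamdef using s0 by (simp add: field_simps)
    finally show ?thesis by (simp add: s_def)
  qed
  have part2: "swss_opt_value E (\<lambda>i. (lamn n i - real n * lam i) / sqrt (real n)) (mun n)
      (\<lambda>j. sqrt (real n) * (real (Nn n j) / real n - nu j)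
         + (\<Sum>i\<in>{i. (i, j) \<in> E}. sqrt (real n) * (mun n i j - mu i j) / mun n i j * (xs i j * nu j))) p
      (- (((\<chi> i. 1) :: real^'i) \<bullet> (matrix_inv (B1mat E (mun n) jh) *v (\<chi> i. (lamn n i - (\<Sum>j\<in>{j. (i, j) \<in> E}. mun n i j * xs i j * real (Nn n j))) / sqrt (real n))))
        / (((\<chi> i. 1) :: real^'i) \<bullet> (matrix_inv (B1mat E (mun n) jh) *v (\<chi> i. p i))))"
    if pp: "\<And>i. p i > 0" and n1: "n \<ge> 1" for p n
    by (rule swss_gen[OF tree mun_pos K2rg K2col K2row[OF n1] pp])
  show ?thesis
    unfolding Let_def
    using inv1 inv2 part1 part2 by blast
qed

end
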